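(* Assume (A) or (B) and $p>1$. Let $u$ be a solution of problem (P) in $\mathbb{R}^n\times(0,T)$ with $0<T\le\infty$ and initial datum $u_0$. Then there is a constant $C^*$ depending only on $p$ such that $$t^{\frac1{p-1}}\|S(t)u_0w\|_{\infty}\le C^*\quad\text{for all }t\in(0,T).$$
   Context: (A): $w(x)=|x_1|^a$ on $\mathbb{R}^n$ with $a\in[0,1)$; (B): $w(x)=|x|^b$ with $b\in[0,n)$. Problem (P): $\partial_t u-w^{-1}\operatorname{div}(w\nabla u)=u^p$, $u(\cdot,0)=u_0\ge0$. $\Gamma$ is the (positive) fundamental solution of $\partial_t v-w^{-1}\operatorname{div}(w\nabla v)=0$ with pole at $(y,0)$, assumed to satisfy (K1) $\int\Gamma(x,y,t)w(x)dx=\int\Gamma(x,y,t)w(y)dy=1$; (K2) $\Gamma(x,y,t)=\int\Gamma(x,\xi,t-s)\Gamma(\xi,y,s)w(\xi)d\xi$ for $t>s>0$; (K3) $c_*e^{-|x-y|^2/(c_*t)}\le \sqrt{w(B(x,\sqrt t))w(B(y,\sqrt t))}\,\Gamma(x,y,t)\le C_*e^{-|x-y|^2/(C_*t)}$, $w(E)=\int_Ew$. $[S(t)\varphi w](x):=\int\Gamma(x,y,t)\varphi(y)w(y)\,dy$. A solution in $\mathbb{R}^n\times(0,T)$ is a nonnegative measurable $u\in L^\infty(0,T;L^\infty)$ with $u(x,t)=\int\Gamma(x,y,t)u_0(y)w(y)dy+\int_0^t\int\Gamma(x,y,t-s)u(y,s)^pw(y)dyds<\infty$ for a.e. $x$,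 all $t\in(0,T)$. *)

theory Defs
  imports "HOL-Probability.Probability"
begin

text \<open>Points of R^n are represented as extensional functions nat => real supported on
  indices 0..n-1 (coordinate x_1 of the paper is x 0); Lebesgue measure on R^n is the
  product measure of lborel over the index set.\<close>

definition Rn :: "nat \<Rightarrow> (nat \<Rightarrow> real) measure" where
  "Rn n = PiM {..<n} (\<lambda>_. lborel)"

definition enorm :: "nat \<Rightarrow> (nat \<Rightarrow> real) \<Rightarrow> real" where
  "enorm n x = sqrt (\<Sum>i<n. (x i)^2)"

definition edist :: "nat \<Rightarrow> (nat \<Rightarrow> real) \<Rightarrow> (nat \<Rightarrow> real) \<Rightarrow> real" where
  "edist n x y = enorm n (\<lambda>i. x i - y i)"

definition rpow :: "real \<Rightarrow> real \<Rightarrow> real" where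
  "rpow t a = (if a = 0 then 1 else t powr a)"

definition weight_A :: "nat \<Rightarrow> ((nat \<Rightarrow> real) \<Rightarrow> real) \<Rightarrow> bool" where
  "weight_A n w \<longleftrightarrow> (\<exists>a. 0 \<le> a \<and> a < 1 \<and> w = (\<lambda>x. rpow \<bar>x 0\<bar> a))"

definition weight_B :: "nat \<Rightarrow> ((nat \<Rightarrow> real) \<Rightarrow> real) \<Rightarrow> bool" where
  "weight_B n w \<longleftrightarrow> (\<exists>b. 0 \<le> b \<and> b < real n \<and> w = (\<lambda>x. rpow (enorm n x) b))"

definition wmeas :: "nat \<Rightarrow> ((nat \<Rightarrow> real) \<Rightarrow> real) \<Rightarrow> (nat \<Rightarrow> real) set \<Rightarrow> real" where
  "wmeas n w E = enn2real (\<integral>\<^sup>+ y \<in> E. ennreal (w y) \<partial>Rn n)"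

definition wball :: "nat \<Rightarrow> ((nat \<Rightarrow> real) \<Rightarrow> real) \<Rightarrow> (nat \<Rightarrow> real) \<Rightarrow> real \<Rightarrow> real" where
  "wball n w x r = wmeas n w {y \<in> space (Rn n). edist n x y < r}"

definition kernel_ok :: "nat \<Rightarrow> ((nat \<Rightarrow> real) \<Rightarrow> real)
    \<Rightarrow> ((nat \<Rightarrow> real) \<Rightarrow> (nat \<Rightarrow> real) \<Rightarrow> real \<Rightarrow> real) \<Rightarrow> bool" where
  "kernel_ok n w \<Gamma> \<longleftrightarrow>
     (\<lambda>(x, y, t). if 0 < t then \<Gamma> x y t else 0)
        \<in> borel_measurable (Rn n \<Otimes>\<^sub>M Rn n \<Otimes>\<^sub>M lborel)
   \<and> (\<forall>x\<in>space (Rn n). \<forall>y\<in>space (Rn n). \<forall>t>0. 0 < \<Gamma> x y t)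
   \<and> (\<forall>y\<in>space (Rn n). \<forall>t>0.
        (\<integral>\<^sup>+ x. ennreal (\<Gamma> x y t * w x) \<partial>Rn n) = 1)
   \<and> (\<forall>x\<in>space (Rn n). \<forall>t>0.
        (\<integral>\<^sup>+ y. ennreal (\<Gamma> x y t * w y) \<partial>Rn n) = 1)
   \<and> (\<forall>x\<in>space (Rn n). \<forall>y\<in>space (Rn n). \<forall>t s. 0 < s \<and> s < t \<longrightarrow>
        ennreal (\<Gamma> x y t) =
          (\<integral>\<^sup>+ \<xi>. ennreal (\<Gamma> x \<xi> (t - s) * \<Gamma> \<xi> y s * w \<xi>) \<partial>Rn n))
   \<and> (\<exists>c1 C1. 0 < c1 \<and> 0 < C1 \<and>
        (\<forall>x\<in>space (Rn n). \<forall>y\<in>space (Rn n). \<forall>t>0.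
          c1 * exp (- ((edist n x y)^2) / (c1 * t))
            \<le> sqrt (wball n w x (sqrt t) * wball n w y (sqrt t)) * \<Gamma> x y t
        \<and> sqrt (wball n w x (sqrt t) * wball n w y (sqrt t)) * \<Gamma> x y t
            \<le> C1 * exp (- ((edist n x y)^2) / (C1 * t))))"

definition Sop :: "nat \<Rightarrow> ((nat \<Rightarrow> real) \<Rightarrow> real)
    \<Rightarrow> ((nat \<Rightarrow> real) \<Rightarrow> (nat \<Rightarrow> real) \<Rightarrow> real \<Rightarrow> real)
    \<Rightarrow> real \<Rightarrow> ((nat \<Rightarrow> real) \<Rightarrow> real) \<Rightarrow> (nat \<Rightarrow> real) \<Rightarrow> ennreal" where
  "Sop n w \<Gamma> t \<phi> x = (\<integral>\<^sup>+ y. ennreal (\<Gamma> x y t * \<phi> y * w y) \<partial>Rn n)"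

definition is_solution :: "nat \<Rightarrow> ((nat \<Rightarrow> real) \<Rightarrow> real)
    \<Rightarrow> ((nat \<Rightarrow> real) \<Rightarrow> (nat \<Rightarrow> real) \<Rightarrow> real \<Rightarrow> real) \<Rightarrow> real \<Rightarrow> ereal
    \<Rightarrow> ((nat \<Rightarrow> real) \<Rightarrow> real) \<Rightarrow> ((nat \<Rightarrow> real) \<Rightarrow> real \<Rightarrow> real) \<Rightarrow> bool" where
  "is_solution n w \<Gamma> p T u0 u \<longleftrightarrow>
     (\<lambda>(x, t). if 0 < t \<and> ereal t < T then u x t else 0)
        \<in> borel_measurable (Rn n \<Otimes>\<^sub>M lborel)
   \<and> (\<forall>x\<in>space (Rn n). \<forall>t. 0 < t \<and> ereal t < T \<longrightarrow> 0 \<le> u x t)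
   \<and> (\<exists>M. AE t in lborel. 0 < t \<and> ereal t < T \<longrightarrow> (AE x in Rn n. u x t \<le> M))
   \<and> (\<forall>t. 0 < t \<and> ereal t < T \<longrightarrow>
        (AE x in Rn n. ennreal (u x t) =
            Sop n w \<Gamma> t u0 x
          + (\<integral>\<^sup>+ s \<in> {0<..<t}. (\<integral>\<^sup>+ y. ennreal (\<Gamma> x y (t - s) * (u y s) powr p * w y) \<partial>Rn n)
               \<partial>lborel)))"

end

theory Submission
  imports Defs
begin


lemma AE_interval_ex:
  assumes "AE s in lborel. P s" "(a::real) < b"
  shows "\<exists>s. a < s \<and> s < b \<and> P s"
proof (rule ccontr)
  assume "\<not> ?thesis"
  then have "AE s in lborel. s \<notin> {a<..<b}" using assms(1) by (auto elim: AE_mp)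
  then have "emeasure lborel {a<..<b} = 0"
    by (subst (asm) AE_iff_measurable[where N="{a<..<b}"]) auto
  with assms(2) show False by simp
qed

lemma young_tangent:
  fixes f c p :: real
  assumes "1 < p" "0 \<le> f" "0 \<le> c"
  shows "p * c powr (p - 1) * f \<le> f powr p + (p - 1) * c powr p"
proof (cases "c = 0")
  case True then show ?thesis using assms by simp
next
  case False
  then have c: "0 < c" using assms by simp
  define q where "q = p / (p - 1)"
  have q1: "1 < q" using assms unfolding q_def by (simp add: field_simps)
  have pq: "1/p + 1/q = 1" using assms unfolding q_def by (simp add: field_simps)
  have "f * c powr (p - 1) \<le> f powr p / p + (c powr (p - 1)) powr q / q"
    using Youngs_inequality[OF assms(1) q1 pq assms(2)] by simp
  also have "(c powr (p - 1)) powr q = c powr p"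
    using assms unfolding q_def by (simp add: powr_powr)
  finally have "f * c powr (p - 1) \<le> f powr p / p + c powr p / q" .
  then have "p * (f * c powr (p - 1)) \<le> p * (f powr p / p + c powr p / q)"
    using assms by simp
  also have "\<dots> = f powr p + (p - 1) * c powr p"
    using assms unfolding q_def by (simp add: field_simps)
  finally show ?thesis by (simp add: mult_ac)
qed



lemma blowup:
  fixes \<psi> :: "real \<Rightarrow> ennreal" and a :: ennreal and p \<tau> M :: real
  assumes p: "1 < p" and tau: "0 < \<tau>"
    and meas: "\<psi> \<in> borel_measurable lborel"
    and A1: "\<And>t. 0 < t \<Longrightarrow> t < \<tau> \<Longrightarrow>
         a + (\<integral>\<^sup>+s\<in>{0<..<t}. ennreal (enn2real (\<psi> s) powr p) \<partial>lborel) \<le> \<psi> t"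
    and A2: "AE s in lborel. 0 < s \<and> s < \<tau> \<longrightarrow> \<psi> s \<le> ennreal M"
  shows "a \<noteq> \<infinity> \<and> \<tau> * enn2real a powr (p - 1) \<le> 1 / (1 - 2 powr (1 - p))"
proof -
  define g where "g s = ennreal (enn2real (\<psi> s) powr p)" for s
  have gm[measurable]: "g \<in> borel_measurable lborel" unfolding g_def using meas by measurable
  define G where "G t = a + (\<integral>\<^sup>+s\<in>{0<..<t}. g s \<partial>lborel)" for t
  have A1': "G t \<le> \<psi> t" if "0 < t" "t < \<tau>" for t using A1[OF that] unfolding G_def g_def .
  have Gmono: "G s \<le> G t" if "s \<le> t" for s t
    unfolding G_def using that
    by (intro add_left_mono nn_integral_mono mult_left_mono) (auto simp: indicator_def)
  have G0: "G 0 = a" unfolding G_def by simp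
  define M' where "M' = max M 0"
  have GM: "G t \<le> ennreal M'" if tt: "0 \<le> t" "t < \<tau>" for t
  proof -
    obtain t' where t': "t < t'" "t' < \<tau>" "0 < t' \<and> t' < \<tau> \<longrightarrow> \<psi> t' \<le> ennreal M"
      using AE_interval_ex[OF A2 tt(2)] by blast
    have "G t \<le> G t'" using Gmono t' by simp
    also have "\<dots> \<le> \<psi> t'" using A1' t' tt by simp
    also have "\<dots> \<le> ennreal M" using t' tt by simp
    also have "\<dots> \<le> ennreal M'" unfolding M'_def by (simp add: ennreal_leI)
    finally show ?thesis .
  qed
  have Gfin: "G t = ennreal (enn2real (G t))" if "0 \<le> t" "t < \<tau>" for t
  proof -
    have "G t < top" using GM[OF that] ennreal_less_top by (rule le_less_trans)
    then show ?thesis by simp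
  qed
  define Gr where "Gr t = enn2real (G t)" for t
  have GrM: "Gr t \<le> M'" if "0 \<le> t" "t < \<tau>" for t
    unfolding Gr_def by (rule enn2real_leI[OF _ GM[OF that]]) (simp add: M'_def)
  have afin: "a = ennreal (Gr 0)" using Gfin[of 0] tau G0 unfolding Gr_def by simp
  define ar where "ar = Gr 0"
  have ar0: "0 \<le> ar" unfolding ar_def Gr_def by simp
  have key: "Gr s + (t - s) * Gr s powr p \<le> Gr t" if st: "0 \<le> s" "s < t" "t < \<tau>" for s t
  proof -
    have split: "(\<integral>\<^sup>+r\<in>{0<..<s}. g r \<partial>lborel) + (\<integral>\<^sup>+r\<in>{s<..<t}. g r \<partial>lborel)
        \<le> (\<integral>\<^sup>+r\<in>{0<..<t}. g r \<partial>lborel)"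
    proof -
      have "(\<integral>\<^sup>+r\<in>{0<..<s}. g r \<partial>lborel) + (\<integral>\<^sup>+r\<in>{s<..<t}. g r \<partial>lborel)
          = (\<integral>\<^sup>+r. g r * indicator {0<..<s} r + g r * indicator {s<..<t} r \<partial>lborel)"
        by (rule nn_integral_add[symmetric]) auto
      also have "\<dots> \<le> (\<integral>\<^sup>+r\<in>{0<..<t}. g r \<partial>lborel)"
        using st by (intro nn_integral_mono) (auto simp: indicator_def)
      finally show ?thesis .
    qed
    have lower: "ennreal ((t - s) * Gr s powr p) \<le> (\<integral>\<^sup>+r\<in>{s<..<t}. g r \<partial>lborel)"
    proof -
      have "ennreal ((t - s) * Gr s powr p) = (\<integral>\<^sup>+r. ennreal (Gr s powr p) * indicator {s<..<t} r \<partial>lborel)"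
        using st by (simp add: nn_integral_cmult_indicator ennreal_mult mult.commute)
      also have "\<dots> \<le> (\<integral>\<^sup>+r\<in>{s<..<t}. g r \<partial>lborel)"
      proof (rule nn_integral_mono_AE)
        show "AE r in lborel. ennreal (Gr s powr p) * indicator {s<..<t} r \<le> g r * indicator {s<..<t} r"
          using A2
        proof (rule eventually_mono)
          fix r assume r: "0 < r \<and> r < \<tau> \<longrightarrow> \<psi> r \<le> ennreal M"
          show "ennreal (Gr s powr p) * indicator {s<..<t} r \<le> g r * indicator {s<..<t} r"
          proof (cases "r \<in> {s<..<t}")
            case True
            then have r0: "0 < r" "r < \<tau>" using st by auto
            have "G s \<le> \<psi> r" using Gmono[of s r] A1'[OF r0] True by auto
            moreover have "\<psi> r < \<infinity>" using r r0 by (simp add: le_less_trans)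
            ultimately have "Gr s \<le> enn2real (\<psi> r)" unfolding Gr_def by (simp add: enn2real_mono)
            then have "Gr s powr p \<le> enn2real (\<psi> r) powr p"
              using p by (intro powr_mono2) (auto simp: Gr_def)
            then show ?thesis using True by (simp add: g_def ennreal_leI)
          qed simp
        qed
      qed
      finally show ?thesis .
    qed
    have "G s + ennreal ((t - s) * Gr s powr p) \<le> a + ((\<integral>\<^sup>+r\<in>{0<..<s}. g r \<partial>lborel) + (\<integral>\<^sup>+r\<in>{s<..<t}. g r \<partial>lborel))"
      unfolding G_def add.assoc by (intro add_left_mono lower)
    also have "\<dots> \<le> G t" unfolding G_def by (intro add_left_mono split)
    finally have "G s + ennreal ((t - s) * Gr s powr p) \<le> G t" .
    then have "ennreal (Gr s) + ennreal ((t - s) * Gr s powr p) \<le> ennreal (Gr t)"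
      using Gfin[of s] Gfin[of t] st unfolding Gr_def by simp
    then show ?thesis using st
      by (simp add: ennreal_plus[symmetric] Gr_def del: ennreal_plus)
  qed
  define q where "q = 2 powr (1 - p)"
  have q01: "0 < q" "q < 1"
  proof -
    show "0 < q" unfolding q_def by simp
    have "2 powr (1 - p) < 2 powr 0" using p by (intro powr_less_mono) auto
    then show "q < 1" unfolding q_def by simp
  qed
  define K where "K = 1 / (1 - q)"
  have Kpos: "0 < K" unfolding K_def using q01 by simp
  show ?thesis
  proof (cases "ar = 0")
    case True
    then show ?thesis using afin Kpos p unfolding ar_def K_def q_def by simp
  next
    case False
    then have arp: "0 < ar" using ar0 by simp
    define h where "h k = 2 ^ k * ar" for k :: nat
    define d where "d k = h k powr (1 - p)" for k
    define tk where "tk k = (\<Sum>j<k. d j)" for k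
    have hpos: "0 < h k" for k unfolding h_def using arp by simp
    have dpos: "0 < d k" for k unfolding d_def using hpos[of k] by simp
    have tk0: "0 \<le> tk k" for k unfolding tk_def using dpos by (simp add: less_imp_le sum_nonneg)
    have claim: "tk k < \<tau> \<longrightarrow> h k \<le> Gr (tk k)" for k
    proof (induction k)
      case 0
      then show ?case by (simp add: tk_def h_def ar_def)
    next
      case (Suc k)
      show ?case
      proof
        assume lt: "tk (Suc k) < \<tau>"
        have tks: "tk (Suc k) = tk k + d k" unfolding tk_def by simp
        then have lt': "tk k < \<tau>" using lt dpos[of k] by simp
        with Suc have IH: "h k \<le> Gr (tk k)" by simp
        have "h (Suc k) = h k + d k * h k powr p"
        proof -
          have "d k * h k powr p = h k" unfolding d_def using hpos[of k] by (simp add: powr_add[symmetric])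
          then show ?thesis unfolding h_def by simp
        qed
        also have "\<dots> \<le> Gr (tk k) + d k * Gr (tk k) powr p"
          using IH hpos[of k] dpos[of k] p
          by (intro add_mono mult_left_mono powr_mono2) auto
        also have "\<dots> \<le> Gr (tk (Suc k))"
          using key[of "tk k" "tk (Suc k)"] tk0[of k] tks dpos[of k] lt by simp
        finally show "h (Suc k) \<le> Gr (tk (Suc k))" .
      qed
    qed
    have dq: "d j = ar powr (1 - p) * q ^ j" for j
    proof -
      have "d j = (2 powr real j) powr (1 - p) * ar powr (1 - p)"
        unfolding d_def h_def using arp by (simp add: powr_mult powr_realpow)
      also have "(2 powr real j) powr (1 - p) = q ^ j"
        unfolding q_def by (simp add: powr_powr powr_realpow[symmetric] mult.commute)
      finally show ?thesis by simp
    qed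
    have tkb: "tk k \<le> ar powr (1 - p) * K" for k
    proof -
      have "tk k = ar powr (1 - p) * (\<Sum>j<k. q ^ j)" unfolding tk_def dq by (simp add: sum_distrib_left)
      also have "(\<Sum>j<k. q ^ j) = (1 - q ^ k) / (1 - q)" using q01 by (simp add: sum_gp_strict)
      also have "\<dots> \<le> K" unfolding K_def using q01 by (simp add: divide_right_mono)
      finally show ?thesis using arp by (simp add: mult_left_mono)
    qed
    have "\<tau> * ar powr (p - 1) \<le> K"
    proof (rule ccontr)
      assume "\<not> ?thesis"
      then have "K < \<tau> * ar powr (p - 1)" by simp
      then have "ar powr (1 - p) * K < \<tau>"
        using arp by (simp add: powr_diff field_simps)
      then have "tk k < \<tau>" for k using tkb[of k] by simp
      then have "2 ^ k * ar \<le> M'" for k using claim[of k] GrM[of "tk k"] tk0[of k] unfolding h_def by simp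
      moreover obtain k where "M' / ar < 2 ^ k" using real_arch_pow[of 2 "M' / ar"] by auto
      then have "M' < 2 ^ k * ar" using arp by (simp add: pos_divide_less_eq)
      ultimately show False by (metis not_le)
    qed
    then show ?thesis using afin ar0 unfolding ar_def K_def q_def by simp
  qed
qed



lemma sf: "sigma_finite_measure (Rn n)"
  unfolding Rn_def
  by (simp add: product_sigma_finite.sigma_finite product_sigma_finite_def lborel.sigma_finite_measure_axioms)

lemma wprops: "weight_A n w \<or> weight_B n w \<Longrightarrow> 1 \<le> n \<Longrightarrow> w \<in> borel_measurable (Rn n) \<and> (\<forall>x. 0 \<le> w x)"
  unfolding weight_A_def weight_B_def rpow_def Rn_def enorm_def by auto

lemma ereal_lt_T: "(t::real) < \<tau> \<Longrightarrow> ereal \<tau> < T \<Longrightarrow> ereal t < T"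
  by (meson ereal_less(2) order.strict_trans less_ereal.simps(1))

lemma pointwise:
  fixes p \<tau> :: real and T :: ereal
  assumes p: "1 < p" and n: "1 \<le> n" and wt: "weight_A n w \<or> weight_B n w"
    and K: "kernel_ok n w \<Gamma>" and tau: "0 < \<tau>" "ereal \<tau> < T"
    and u0m: "u0 \<in> borel_measurable (Rn n)" and u0p: "\<forall>x\<in>space (Rn n). 0 \<le> u0 x"
    and sol: "is_solution n w \<Gamma> p T u0 u" and x: "x \<in> space (Rn n)"
  shows "Sop n w \<Gamma> \<tau> u0 x \<noteq> \<infinity> \<and> \<tau> * enn2real (Sop n w \<Gamma> \<tau> u0 x) powr (p - 1) \<le> 1 / (1 - 2 powr (1 - p))"
proof -
  define R where "R = Rn n"
  interpret R: sigma_finite_measure R unfolding R_def by (rule sf)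
  interpret RR: pair_sigma_finite R R by unfold_locales
  interpret RL: pair_sigma_finite R lborel by unfold_locales
  interpret LR: pair_sigma_finite lborel R by unfold_locales
  have wm[measurable]: "w \<in> borel_measurable R" and w0: "\<And>y. 0 \<le> w y"
    using wprops[OF wt n] unfolding R_def by auto
  have u0m'[measurable]: "u0 \<in> borel_measurable R" using u0m unfolding R_def .
  have u0p': "\<And>y. y \<in> space R \<Longrightarrow> 0 \<le> u0 y" using u0p unfolding R_def by auto
  define G3 where "G3 = (\<lambda>(x, y, t). if 0 < t then \<Gamma> x y t else 0)"
  have G3m[measurable]: "G3 \<in> borel_measurable (R \<Otimes>\<^sub>M R \<Otimes>\<^sub>M lborel)"
    using K unfolding kernel_ok_def G3_def R_def by simp
  have G3e: "G3 (a, b, t) = \<Gamma> a b t" if "0 < t" for a b t using that unfolding G3_def by simp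
  have Kpos: "\<And>a b t. a \<in> space R \<Longrightarrow> b \<in> space R \<Longrightarrow> 0 < t \<Longrightarrow> 0 < \<Gamma> a b t"
    using K unfolding kernel_ok_def R_def by blast
  have K1: "\<And>a t. a \<in> space R \<Longrightarrow> 0 < t \<Longrightarrow> (\<integral>\<^sup>+ y. ennreal (\<Gamma> a y t * w y) \<partial>R) = 1"
    using K unfolding kernel_ok_def R_def by blast
  have K2: "\<And>a b t s. a \<in> space R \<Longrightarrow> b \<in> space R \<Longrightarrow> 0 < s \<Longrightarrow> s < t \<Longrightarrow>
      ennreal (\<Gamma> a b t) = (\<integral>\<^sup>+ \<xi>. ennreal (\<Gamma> a \<xi> (t - s) * \<Gamma> \<xi> b s * w \<xi>) \<partial>R)"
    using K unfolding kernel_ok_def R_def by blast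
  define Um where "Um = (\<lambda>(x, t). if 0 < t \<and> ereal t < T then u x t else 0)"
  have Umm[measurable]: "Um \<in> borel_measurable (R \<Otimes>\<^sub>M lborel)"
    using sol unfolding is_solution_def Um_def R_def by simp
  have Ume: "Um (a, t) = u a t" if "0 < t" "t < \<tau>" for a t
    using that ereal_lt_T[OF that(2) tau(2)] unfolding Um_def by simp
  have upos: "\<And>y t. y \<in> space R \<Longrightarrow> 0 < t \<Longrightarrow> ereal t < T \<Longrightarrow> 0 \<le> u y t"
    using sol unfolding is_solution_def R_def by blast
  obtain M where ubd: "AE t in lborel. 0 < t \<and> ereal t < T \<longrightarrow> (AE y in R. u y t \<le> M)"
    using sol unfolding is_solution_def R_def by blast
  have ueq: "\<And>t. 0 < t \<Longrightarrow> ereal t < T \<Longrightarrow> (AE y in R. ennreal (u y t) = Sop n w \<Gamma> t u0 y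
          + (\<integral>\<^sup>+ s \<in> {0<..<t}. (\<integral>\<^sup>+ \<xi>. ennreal (\<Gamma> y \<xi> (t - s) * (u \<xi> s) powr p * w \<xi>) \<partial>R) \<partial>lborel))"
    using sol unfolding is_solution_def R_def by blast
  have xR[measurable]: "x \<in> space R" using x unfolding R_def .
  have swap: "(\<integral>\<^sup>+y. ennreal (G3 (x, y, t' - s') * w y) * (\<integral>\<^sup>+\<xi>. ennreal (G3 (y, \<xi>, s') * h \<xi>) \<partial>R) \<partial>R)
      = (\<integral>\<^sup>+\<xi>. ennreal (G3 (x, \<xi>, t') * h \<xi>) \<partial>R)"
    if st: "0 < s'" "s' < t'" and hm[measurable]: "h \<in> borel_measurable R" and h0: "\<And>\<xi>. \<xi> \<in> space R \<Longrightarrow> 0 \<le> h \<xi>"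
    for t' s' h
  proof -
    have "(\<integral>\<^sup>+y. ennreal (G3 (x, y, t' - s') * w y) * (\<integral>\<^sup>+\<xi>. ennreal (G3 (y, \<xi>, s') * h \<xi>) \<partial>R) \<partial>R)
        = (\<integral>\<^sup>+y. (\<integral>\<^sup>+\<xi>. ennreal (G3 (x, y, t' - s') * w y) * ennreal (G3 (y, \<xi>, s') * h \<xi>) \<partial>R) \<partial>R)"
      by (intro nn_integral_cong nn_integral_cmult[symmetric]) measurable
    also have "\<dots> = (\<integral>\<^sup>+\<xi>. (\<integral>\<^sup>+y. ennreal (G3 (x, y, t' - s') * w y) * ennreal (G3 (y, \<xi>, s') * h \<xi>) \<partial>R) \<partial>R)"
      by (rule RR.Fubini'[symmetric]) measurable
    also have "\<dots> = (\<integral>\<^sup>+\<xi>. ennreal (G3 (x, \<xi>, t') * h \<xi>) \<partial>R)"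
    proof (rule nn_integral_cong)
      fix \<xi> assume \<xi>: "\<xi> \<in> space R"
      have "(\<integral>\<^sup>+y. ennreal (G3 (x, y, t' - s') * w y) * ennreal (G3 (y, \<xi>, s') * h \<xi>) \<partial>R)
          = (\<integral>\<^sup>+y. ennreal (\<Gamma> x y (t' - s') * \<Gamma> y \<xi> s' * w y) * ennreal (h \<xi>) \<partial>R)"
      proof (rule nn_integral_cong)
        fix y assume y: "y \<in> space R"
        have a: "0 < \<Gamma> x y (t' - s')" "0 < \<Gamma> y \<xi> s'" using Kpos[OF xR y] Kpos[OF y \<xi>] st by auto
        show "ennreal (G3 (x, y, t' - s') * w y) * ennreal (G3 (y, \<xi>, s') * h \<xi>)
            = ennreal (\<Gamma> x y (t' - s') * \<Gamma> y \<xi> s' * w y) * ennreal (h \<xi>)"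
          using a w0[of y] h0[OF \<xi>] st
          by (simp add: G3e ennreal_mult[symmetric] mult_ac)
      qed
      also have "\<dots> = ennreal (\<Gamma> x \<xi> t') * ennreal (h \<xi>)"
      proof -
        have "(\<lambda>y. ennreal (\<Gamma> x y (t' - s') * \<Gamma> y \<xi> s' * w y)) = (\<lambda>y. ennreal (G3 (x, y, t' - s') * G3 (y, \<xi>, s') * w y))"
          using st by (simp add: G3e)
        also have "\<dots> \<in> borel_measurable R" using \<xi> by measurable
        finally have mm: "(\<lambda>y. ennreal (\<Gamma> x y (t' - s') * \<Gamma> y \<xi> s' * w y)) \<in> borel_measurable R" .
        show ?thesis using K2[OF xR \<xi> st] by (simp add: nn_integral_multc[OF mm])
      qed
      also have "\<dots> = ennreal (G3 (x, \<xi>, t') * h \<xi>)"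
        using Kpos[OF xR \<xi>, of t'] st h0[OF \<xi>] by (simp add: G3e ennreal_mult)
      finally show "(\<integral>\<^sup>+y. ennreal (G3 (x, y, t' - s') * w y) * ennreal (G3 (y, \<xi>, s') * h \<xi>) \<partial>R)
          = ennreal (G3 (x, \<xi>, t') * h \<xi>)" .
    qed
    finally show ?thesis .
  qed
  define \<psi> where "\<psi> t = (\<integral>\<^sup>+y. ennreal (G3 (x, y, \<tau> - t) * Um (y, t) * w y) \<partial>R)" for t
  have \<psi>m: "\<psi> \<in> borel_measurable lborel" unfolding \<psi>_def by measurable
  define \<phi> where "\<phi> s = (\<integral>\<^sup>+\<xi>. ennreal (G3 (x, \<xi>, \<tau> - s) * (Um (\<xi>, s) powr p * w \<xi>)) \<partial>R)" for s
  have \<phi>m: "\<phi> \<in> borel_measurable lborel" unfolding \<phi>_def by measurable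
  have eq1: "\<psi> t = Sop n w \<Gamma> \<tau> u0 x + (\<integral>\<^sup>+s\<in>{0<..<t}. \<phi> s \<partial>lborel)" if t: "0 < t" "t < \<tau>" for t
  proof -
    have tT: "ereal t < T" using ereal_lt_T[OF t(2) tau(2)] .
    define c where "c y = ennreal (G3 (x, y, \<tau> - t) * w y)" for y
    have cm[measurable]: "c \<in> borel_measurable R" unfolding c_def by measurable
    define S' where "S' y = (\<integral>\<^sup>+z. ennreal (G3 (y, z, t) * (u0 z * w z)) \<partial>R)" for y
    define I' where "I' y = (\<integral>\<^sup>+s. (\<integral>\<^sup>+\<xi>. ennreal (G3 (y, \<xi>, t - s) * (Um (\<xi>, s) powr p * w \<xi>)) \<partial>R)
        * indicator {0<..<t} s \<partial>lborel)" for y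
    have S'm[measurable]: "S' \<in> borel_measurable R" unfolding S'_def by measurable
    have I'm[measurable]: "I' \<in> borel_measurable R" unfolding I'_def by measurable
    have "\<psi> t = (\<integral>\<^sup>+y. c y * ennreal (u y t) \<partial>R)"
      unfolding \<psi>_def c_def
    proof (rule nn_integral_cong)
      fix y assume y: "y \<in> space R"
      have "0 < \<Gamma> x y (\<tau> - t)" using Kpos[OF xR y] t by simp
      then show "ennreal (G3 (x, y, \<tau> - t) * Um (y, t) * w y) = ennreal (G3 (x, y, \<tau> - t) * w y) * ennreal (u y t)"
        using t w0[of y] upos[OF y t(1) tT] by (simp add: G3e Ume ennreal_mult[symmetric] mult_ac)
    qed
    also have "\<dots> = (\<integral>\<^sup>+y. c y * (S' y + I' y) \<partial>R)"
    proof (rule nn_integral_cong_AE)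
      show "AE y in R. c y * ennreal (u y t) = c y * (S' y + I' y)"
        using ueq[OF t(1) tT] AE_space[of R]
      proof eventually_elim
        case (elim y)
        have "Sop n w \<Gamma> t u0 y = S' y"
          unfolding Sop_def S'_def R_def[symmetric] using t by (intro nn_integral_cong) (simp add: G3e mult_ac)
        moreover have "(\<integral>\<^sup>+ s \<in> {0<..<t}. (\<integral>\<^sup>+ \<xi>. ennreal (\<Gamma> y \<xi> (t - s) * (u \<xi> s) powr p * w \<xi>) \<partial>R) \<partial>lborel) = I' y"
          unfolding I'_def
        proof (rule nn_integral_cong)
          fix s
          show "(\<integral>\<^sup>+ \<xi>. ennreal (\<Gamma> y \<xi> (t - s) * (u \<xi> s) powr p * w \<xi>) \<partial>R) * indicator {0<..<t} s
            = (\<integral>\<^sup>+\<xi>. ennreal (G3 (y, \<xi>, t - s) * (Um (\<xi>, s) powr p * w \<xi>)) \<partial>R) * indicator {0<..<t} s"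
          proof (cases "s \<in> {0<..<t}")
            case True
            then have "(\<integral>\<^sup>+ \<xi>. ennreal (\<Gamma> y \<xi> (t - s) * (u \<xi> s) powr p * w \<xi>) \<partial>R)
              = (\<integral>\<^sup>+\<xi>. ennreal (G3 (y, \<xi>, t - s) * (Um (\<xi>, s) powr p * w \<xi>)) \<partial>R)"
              using t by (intro nn_integral_cong) (simp add: G3e Ume mult_ac)
            then show ?thesis by simp
          qed simp
        qed
        ultimately show ?case using elim by simp
      qed
    qed
    also have "\<dots> = (\<integral>\<^sup>+y. c y * S' y \<partial>R) + (\<integral>\<^sup>+y. c y * I' y \<partial>R)"
      by (simp add: distrib_left nn_integral_add)
    also have "(\<integral>\<^sup>+y. c y * S' y \<partial>R) = Sop n w \<Gamma> \<tau> u0 x"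
    proof -
      have "(\<integral>\<^sup>+y. c y * S' y \<partial>R) = (\<integral>\<^sup>+z. ennreal (G3 (x, z, \<tau>) * (u0 z * w z)) \<partial>R)"
        unfolding c_def S'_def using swap[of t \<tau> "\<lambda>z. u0 z * w z"] t u0p' w0 by simp
      also have "\<dots> = Sop n w \<Gamma> \<tau> u0 x"
        unfolding Sop_def R_def[symmetric] using tau by (intro nn_integral_cong) (simp add: G3e mult_ac)
      finally show ?thesis .
    qed
    also have "(\<integral>\<^sup>+y. c y * I' y \<partial>R) = (\<integral>\<^sup>+s\<in>{0<..<t}. \<phi> s \<partial>lborel)"
    proof -
      have "(\<integral>\<^sup>+y. c y * I' y \<partial>R) = (\<integral>\<^sup>+y. (\<integral>\<^sup>+s. c y * ((\<integral>\<^sup>+\<xi>. ennreal (G3 (y, \<xi>, t - s) * (Um (\<xi>, s) powr p * w \<xi>)) \<partial>R)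
          * indicator {0<..<t} s) \<partial>lborel) \<partial>R)"
        unfolding I'_def by (intro nn_integral_cong nn_integral_cmult[symmetric]) measurable
      also have "\<dots> = (\<integral>\<^sup>+s. (\<integral>\<^sup>+y. c y * ((\<integral>\<^sup>+\<xi>. ennreal (G3 (y, \<xi>, t - s) * (Um (\<xi>, s) powr p * w \<xi>)) \<partial>R)
          * indicator {0<..<t} s) \<partial>R) \<partial>lborel)"
        by (rule RL.Fubini'[symmetric]) measurable
      also have "\<dots> = (\<integral>\<^sup>+s. (\<integral>\<^sup>+y. c y * (\<integral>\<^sup>+\<xi>. ennreal (G3 (y, \<xi>, t - s) * (Um (\<xi>, s) powr p * w \<xi>)) \<partial>R) \<partial>R)
          * indicator {0<..<t} s \<partial>lborel)"
        by (intro nn_integral_cong) (simp add: mult.assoc[symmetric] nn_integral_multc)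
      also have "\<dots> = (\<integral>\<^sup>+s\<in>{0<..<t}. \<phi> s \<partial>lborel)"
      proof (rule nn_integral_cong)
        fix s
        show "(\<integral>\<^sup>+y. c y * (\<integral>\<^sup>+\<xi>. ennreal (G3 (y, \<xi>, t - s) * (Um (\<xi>, s) powr p * w \<xi>)) \<partial>R) \<partial>R)
          * indicator {0<..<t} s = \<phi> s * indicator {0<..<t} s"
        proof (cases "s \<in> {0<..<t}")
          case True
          have "(\<integral>\<^sup>+y. c y * (\<integral>\<^sup>+\<xi>. ennreal (G3 (y, \<xi>, t - s) * (Um (\<xi>, s) powr p * w \<xi>)) \<partial>R) \<partial>R) = \<phi> s"
            unfolding c_def \<phi>_def
            using swap[of "t - s" "\<tau> - s" "\<lambda>\<xi>. Um (\<xi>, s) powr p * w \<xi>"] True t w0 by simp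
          then show ?thesis by simp
        qed simp
      qed
      finally show ?thesis .
    qed
    finally show ?thesis .
  qed
  have Um0: "0 \<le> Um (y, s)" if "y \<in> space R" "0 < s" "s < \<tau>" for y s
    using that Ume upos ereal_lt_T[OF that(3) tau(2)] by simp
  have kfacts: "(\<integral>\<^sup>+y. ennreal (G3 (x, y, \<tau> - s) * w y) \<partial>R) = 1"
    "\<And>y. y \<in> space R \<Longrightarrow> 0 \<le> G3 (x, y, \<tau> - s) * w y"
    if s: "0 < s" "s < \<tau>" for s
  proof -
    show "(\<integral>\<^sup>+y. ennreal (G3 (x, y, \<tau> - s) * w y) \<partial>R) = 1"
      using K1[OF xR, of "\<tau> - s"] s by (simp add: G3e)
    fix y assume y: "y \<in> space R"
    show "0 \<le> G3 (x, y, \<tau> - s) * w y" using Kpos[OF xR y, of "\<tau> - s"] s w0[of y] by (simp add: G3e)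
  qed
  have jen: "ennreal (enn2real (\<psi> s) powr p) \<le> \<phi> s" if s: "0 < s" "s < \<tau>" for s
  proof (cases "\<psi> s = \<infinity>")
    case True
    then show ?thesis using p by simp
  next
    case False
    define c where "c = enn2real (\<psi> s)"
    have c0: "0 \<le> c" unfolding c_def by simp
    have psc: "\<psi> s = ennreal c" unfolding c_def using False by (simp add: less_top)
    define k where "k y = G3 (x, y, \<tau> - s) * w y" for y
    have km[measurable]: "k \<in> borel_measurable R" unfolding k_def by measurable
    have k0: "\<And>y. y \<in> space R \<Longrightarrow> 0 \<le> k y" unfolding k_def using kfacts(2)[OF s] .
    have kint: "(\<integral>\<^sup>+y. ennreal (k y) \<partial>R) = 1" unfolding k_def using kfacts(1)[OF s] .
    have \<psi>k: "\<psi> s = (\<integral>\<^sup>+y. ennreal (k y * Um (y, s)) \<partial>R)"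
      unfolding \<psi>_def k_def by (simp add: mult_ac)
    have \<phi>k: "\<phi> s = (\<integral>\<^sup>+y. ennreal (k y * Um (y, s) powr p) \<partial>R)"
      unfolding \<phi>_def k_def by (simp add: mult_ac)
    have pw: "ennreal (p * c powr (p - 1)) * ennreal (k y * Um (y, s))
        \<le> ennreal (k y * Um (y, s) powr p) + ennreal ((p - 1) * c powr p) * ennreal (k y)"
      if y: "y \<in> space R" for y
    proof -
      have f0: "0 \<le> Um (y, s)" using Um0[OF y s] .
      have "k y * (p * c powr (p - 1) * Um (y, s)) \<le> k y * (Um (y, s) powr p + (p - 1) * c powr p)"
        using young_tangent[OF p f0 c0] k0[OF y] by (rule mult_left_mono)
      then have "p * c powr (p - 1) * (k y * Um (y, s)) \<le> k y * Um (y, s) powr p + (p - 1) * c powr p * k y"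
        by (simp add: algebra_simps)
      then have "ennreal (p * c powr (p - 1) * (k y * Um (y, s))) \<le> ennreal (k y * Um (y, s) powr p + (p - 1) * c powr p * k y)"
        by (rule ennreal_leI)
      moreover have "0 \<le> p * c powr (p - 1)" "0 \<le> k y * Um (y, s)" "0 \<le> k y * Um (y, s) powr p" "0 \<le> (p - 1) * c powr p"
        using p k0[OF y] f0 by auto
      ultimately show ?thesis using k0[OF y]
        by (simp add: ennreal_mult[symmetric] ennreal_plus[symmetric] del: ennreal_plus)
    qed
    have "ennreal (p * c powr (p - 1)) * \<psi> s
        = (\<integral>\<^sup>+y. ennreal (p * c powr (p - 1)) * ennreal (k y * Um (y, s)) \<partial>R)"
      unfolding \<psi>k by (rule nn_integral_cmult[symmetric]) measurable
    also have "\<dots> \<le> (\<integral>\<^sup>+y. ennreal (k y * Um (y, s) powr p) + ennreal ((p - 1) * c powr p) * ennreal (k y) \<partial>R)"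
      by (rule nn_integral_mono) (rule pw)
    also have "\<dots> = \<phi> s + ennreal ((p - 1) * c powr p)"
      unfolding \<phi>k by (simp add: nn_integral_add nn_integral_cmult kint)
    finally have ineq: "ennreal (p * c powr (p - 1)) * ennreal c \<le> \<phi> s + ennreal ((p - 1) * c powr p)"
      unfolding psc .
    have cc: "c powr (p - 1) * c = c powr p"
    proof (cases "c = 0")
      case False
      then have "0 < c" using c0 by simp
      have "c powr p = c powr ((p - 1) + 1)" by simp
      also have "\<dots> = c powr (p - 1) * c powr 1" by (rule powr_add)
      finally show ?thesis using \<open>0 < c\<close> by simp
    qed simp
    have "ennreal (p * c powr (p - 1)) * ennreal c = ennreal (p * c powr p)"
      using p c0 by (simp add: ennreal_mult[symmetric] cc[symmetric] mult_ac)
    with ineq have ineq2: "ennreal (p * c powr p) \<le> \<phi> s + ennreal ((p - 1) * c powr p)" by simp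
    show ?thesis
    proof (cases "\<phi> s = \<infinity>")
      case True then show ?thesis by simp
    next
      case False
      define f where "f = enn2real (\<phi> s)"
      have f0: "0 \<le> f" unfolding f_def by simp
      have pf: "\<phi> s = ennreal f" unfolding f_def using False by (simp add: less_top)
      have "ennreal (p * c powr p) \<le> ennreal (f + (p - 1) * c powr p)"
        using ineq2 pf f0 p by (simp add: ennreal_plus[symmetric] del: ennreal_plus)
      then have "p * c powr p \<le> f + (p - 1) * c powr p"
        using f0 p by (subst (asm) ennreal_le_iff) auto
      then have "c powr p \<le> f" by (simp add: algebra_simps)
      then show ?thesis unfolding psc pf c_def[symmetric] using c0 by (simp add: ennreal_leI)
    qed
  qed
  define M' where "M' = max M 0"
  have A2: "AE s in lborel. 0 < s \<and> s < \<tau> \<longrightarrow> \<psi> s \<le> ennreal M'"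
    using ubd
  proof (rule eventually_mono)
    fix s assume H: "0 < s \<and> ereal s < T \<longrightarrow> (AE y in R. u y s \<le> M)"
    show "0 < s \<and> s < \<tau> \<longrightarrow> \<psi> s \<le> ennreal M'"
    proof
      assume s: "0 < s \<and> s < \<tau>"
      then have AEu: "AE y in R. u y s \<le> M" using H ereal_lt_T[of s \<tau> T] tau by auto
      have "\<psi> s \<le> (\<integral>\<^sup>+y. ennreal M' * ennreal (G3 (x, y, \<tau> - s) * w y) \<partial>R)"
        unfolding \<psi>_def
      proof (rule nn_integral_mono_AE)
        show "AE y in R. ennreal (G3 (x, y, \<tau> - s) * Um (y, s) * w y) \<le> ennreal M' * ennreal (G3 (x, y, \<tau> - s) * w y)"
          using AEu AE_space[of R]
        proof eventually_elim
          case (elim y)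
          have k0: "0 \<le> G3 (x, y, \<tau> - s) * w y" using kfacts(2)[of s y] s elim by auto
          have "Um (y, s) \<le> M'" using elim s Ume[of s y] unfolding M'_def by auto
          then have "G3 (x, y, \<tau> - s) * w y * Um (y, s) \<le> G3 (x, y, \<tau> - s) * w y * M'"
            using k0 by (rule mult_left_mono)
          then have "ennreal (G3 (x, y, \<tau> - s) * Um (y, s) * w y) \<le> ennreal (M' * (G3 (x, y, \<tau> - s) * w y))"
            by (intro ennreal_leI) (simp add: mult_ac)
          then show ?case using k0 by (simp add: ennreal_mult'' M'_def)
        qed
      qed
      also have "\<dots> = ennreal M' * (\<integral>\<^sup>+y. ennreal (G3 (x, y, \<tau> - s) * w y) \<partial>R)"
        by (rule nn_integral_cmult) measurable
      also have "\<dots> = ennreal M'" using kfacts(1)[of s] s by simp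
      finally show "\<psi> s \<le> ennreal M'" .
    qed
  qed
  have A1: "Sop n w \<Gamma> \<tau> u0 x + (\<integral>\<^sup>+s\<in>{0<..<t}. ennreal (enn2real (\<psi> s) powr p) \<partial>lborel) \<le> \<psi> t"
    if t: "0 < t" "t < \<tau>" for t
    unfolding eq1[OF t]
  proof (intro add_left_mono nn_integral_mono)
    fix s
    show "ennreal (enn2real (\<psi> s) powr p) * indicator {0<..<t} s \<le> \<phi> s * indicator {0<..<t} s"
      using jen[of s] t by (cases "s \<in> {0<..<t}") auto
  qed
  show ?thesis using blowup[OF p tau(1) \<psi>m A1 A2] .
qed


theorem lemma3p1:
  fixes p :: real
  assumes "1 < p"
  shows "\<exists>Cstar::real. \<forall>(n::nat) w \<Gamma> (T::ereal) u0 u.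
      1 \<le> n \<and> (weight_A n w \<or> weight_B n w) \<and> kernel_ok n w \<Gamma> \<and> 0 < T
      \<and> u0 \<in> borel_measurable (Rn n) \<and> (\<forall>x\<in>space (Rn n). 0 \<le> u0 x)
      \<and> is_solution n w \<Gamma> p T u0 u
      \<longrightarrow> (\<forall>t. 0 < t \<and> ereal t < T \<longrightarrow>
            ennreal (t powr (1 / (p - 1))) * esssup (Rn n) (Sop n w \<Gamma> t u0)
              \<le> ennreal Cstar)"
proof -
  define K where "K = 1 / (1 - 2 powr (1 - p))"
  have Kpos: "0 < K"
  proof -
    have "2 powr (1 - p) < 2 powr 0" using assms by (intro powr_less_mono) auto
    then show ?thesis unfolding K_def by simp
  qed
  define e where "e = 1 / (p - 1)"
  have e0: "0 < e" unfolding e_def using assms by simp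
  show ?thesis
  proof (intro exI allI impI)
    fix n w \<Gamma> u0 u and T :: ereal and t :: real
    assume H: "1 \<le> n \<and> (weight_A n w \<or> weight_B n w) \<and> kernel_ok n w \<Gamma> \<and> 0 < T
      \<and> u0 \<in> borel_measurable (Rn n) \<and> (\<forall>x\<in>space (Rn n). 0 \<le> u0 x)
      \<and> is_solution n w \<Gamma> p T u0 u"
      and t: "0 < t \<and> ereal t < T"
    have wm[measurable]: "w \<in> borel_measurable (Rn n)"
      using wprops H by blast
    have u0m[measurable]: "u0 \<in> borel_measurable (Rn n)" using H by blast
    interpret R: sigma_finite_measure "Rn n" by (rule sf)
    define G3 where "G3 = (\<lambda>(x, y, t). if 0 < t then \<Gamma> x y t else 0)"
    have G3m[measurable]: "G3 \<in> borel_measurable (Rn n \<Otimes>\<^sub>M Rn n \<Otimes>\<^sub>M lborel)"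
      using H unfolding kernel_ok_def G3_def by simp
    have "Sop n w \<Gamma> t u0 = (\<lambda>x. \<integral>\<^sup>+y. ennreal (G3 (x, y, t) * u0 y * w y) \<partial>Rn n)"
      unfolding Sop_def G3_def using t by simp
    also have "\<dots> \<in> borel_measurable (Rn n)" by measurable
    finally have Sm: "Sop n w \<Gamma> t u0 \<in> borel_measurable (Rn n)" .
    define B where "B = (K / t) powr e"
    have B0: "0 \<le> B" unfolding B_def by simp
    have bound: "Sop n w \<Gamma> t u0 x \<le> ennreal B" if x: "x \<in> space (Rn n)" for x
    proof -
      have h: "1 \<le> n" "weight_A n w \<or> weight_B n w" "kernel_ok n w \<Gamma>"
        "u0 \<in> borel_measurable (Rn n)" "\<forall>x\<in>space (Rn n). 0 \<le> u0 x" "is_solution n w \<Gamma> p T u0 u"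
        using H by auto
      have t': "0 < t" "ereal t < T" using t by auto
      have P: "Sop n w \<Gamma> t u0 x \<noteq> \<infinity> \<and> t * enn2real (Sop n w \<Gamma> t u0 x) powr (p - 1) \<le> K"
        using pointwise[OF assms h(1,2,3) t' h(4,5,6) x] unfolding K_def .
      define ar where "ar = enn2real (Sop n w \<Gamma> t u0 x)"
      have ar0: "0 \<le> ar" unfolding ar_def by simp
      have "ar \<le> B"
      proof (cases "ar = 0")
        case True then show ?thesis using B0 by simp
      next
        case False
        then have arp: "0 < ar" using ar0 by simp
        have "ar powr (p - 1) * t \<le> K" using P unfolding ar_def by (simp add: mult.commute)
        then have "ar powr (p - 1) \<le> K / t" using t' by (simp add: pos_le_divide_eq)
        then have "(ar powr (p - 1)) powr e \<le> (K / t) powr e" using e0 by (intro powr_mono2) auto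
        also have "(ar powr (p - 1)) powr e = ar" using arp assms unfolding e_def by (simp add: powr_powr)
        finally show ?thesis unfolding B_def .
      qed
      moreover have "Sop n w \<Gamma> t u0 x = ennreal ar" unfolding ar_def using P by (simp add: less_top)
      ultimately show ?thesis by (simp add: ennreal_leI)
    qed
    have "esssup (Rn n) (Sop n w \<Gamma> t u0) \<le> ennreal B"
      using Sm by (rule esssup_I) (auto intro: AE_I2 bound)
    then have "ennreal (t powr e) * esssup (Rn n) (Sop n w \<Gamma> t u0) \<le> ennreal (t powr e) * ennreal B"
      by (rule mult_left_mono) simp
    also have "\<dots> = ennreal (t powr e * B)" using B0 by (simp add: ennreal_mult)
    also have "t powr e * B = K powr e"
      unfolding B_def using t Kpos by (simp add: powr_divide)
    finally show "ennreal (t powr (1 / (p - 1))) * esssup (Rn n) (Sop n w \<Gamma> t u0) \<le> ennreal (K powr e)"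
      unfolding e_def .
  qed
qed

end
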